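(* Let $S\subset\Pi$. The assignments $s_{\alpha_i}(\eta,o)=(s_{\alpha_i}\eta,\ \eta(\alpha_i)^{r_i}o)$ for $\alpha_i\in S$ extend to a well-defined action of the group $W_S$ on the set $\mathbb D(S)\times\{\pm1\}$.
   Context: $\mathfrak g$ is a real split semisimple Lie algebra with simple roots $\Pi=\{\alpha_1,\dots,\alpha_l\}$, coroots $h_{\alpha_j}$, Cartan matrix $C_{i,j}=\alpha_i(h_{\alpha_j})$, Weyl group $W$. For $S\subset\Pi$, $W_S\subset W$ is the subgroup generated by the simple reflections $s_\alpha$, $\alpha\in S$; $\mathbb D(S)$ is the set of functions $\eta:S\to\{\pm1\}$ (colored Dynkin diagrams with colored set $S$). For $\alpha_i\in S$, $s_{\alpha_i}\eta\in\mathbb D(S)$ is defined by $(s_{\alpha_i}\eta)(\alpha_j)=\eta(\alpha_j)\eta(\alpha_i)^{-C_{j,i}}$ for $\alpha_j\in S$, and $r_i$ is the number of $\alpha_j\in\Pi\setminus S$ with $C_{j,i}$ odd. *)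

theory Defs
  imports Complex_Main
begin

text \<open>Simple roots are indexed by a finite type 'i; C i j = alpha_i(h_alpha_j).\<close>

definition finite_type_cartan :: "('i::finite \<Rightarrow> 'i \<Rightarrow> int) \<Rightarrow> bool" where
  "finite_type_cartan C \<longleftrightarrow>
     (\<forall>i. C i i = 2) \<and>
     (\<forall>i j. i \<noteq> j \<longrightarrow> C i j \<le> 0) \<and>
     (\<forall>i j. C i j = 0 \<longleftrightarrow> C j i = 0) \<and>
     (\<exists>d :: 'i \<Rightarrow> real. (\<forall>i. d i > 0) \<and>
        (\<forall>i j. d i * of_int (C i j) = d j * of_int (C j i)) \<and>
        (\<forall>x :: 'i \<Rightarrow> real. x \<noteq> (\<lambda>_. 0) \<longrightarrow>
            (\<Sum>i\<in>UNIV. \<Sum>j\<in>UNIV. x i * d i * of_int (C i j) * x j) > 0))"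

text \<open>Simple reflection s_alpha_i acting on the dual of the Cartan subalgebra, in coordinates
  w.r.t. the basis of simple roots: s_i(v) = v - v(h_i) alpha_i, where
  v(h_i) = sum_k v_k C k i.\<close>

definition simple_refl :: "('i::finite \<Rightarrow> 'i \<Rightarrow> int) \<Rightarrow> 'i \<Rightarrow> ('i \<Rightarrow> real) \<Rightarrow> ('i \<Rightarrow> real)" where
  "simple_refl C i v = (\<lambda>j. if j = i then v j - (\<Sum>k\<in>UNIV. v k * of_int (C k i)) else v j)"

inductive_set weyl_sub :: "('i::finite \<Rightarrow> 'i \<Rightarrow> int) \<Rightarrow> 'i set \<Rightarrow> (('i \<Rightarrow> real) \<Rightarrow> ('i \<Rightarrow> real)) set"
  for C S where
  weyl_id: "id \<in> weyl_sub C S"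
| weyl_step: "w \<in> weyl_sub C S \<Longrightarrow> i \<in> S \<Longrightarrow> simple_refl C i \<circ> w \<in> weyl_sub C S"

text \<open>Colored Dynkin diagrams with colored set S: functions S -> {1,-1},
  extended by the value 1 outside S.\<close>

definition colored :: "'i set \<Rightarrow> ('i \<Rightarrow> real) set" where
  "colored S = {\<eta>. (\<forall>j\<in>S. \<eta> j = 1 \<or> \<eta> j = -1) \<and> (\<forall>j. j \<notin> S \<longrightarrow> \<eta> j = 1)}"

definition refl_col :: "('i \<Rightarrow> 'i \<Rightarrow> int) \<Rightarrow> 'i set \<Rightarrow> 'i \<Rightarrow> ('i \<Rightarrow> real) \<Rightarrow> ('i \<Rightarrow> real)" where
  "refl_col C S i \<eta> = (\<lambda>j. if j \<in> S then \<eta> j * (\<eta> i) powi (- C j i) else 1)"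

definition r_num :: "('i::finite \<Rightarrow> 'i \<Rightarrow> int) \<Rightarrow> 'i set \<Rightarrow> 'i \<Rightarrow> nat" where
  "r_num C S i = card {j. j \<notin> S \<and> odd (C j i)}"

definition gen_act :: "('i::finite \<Rightarrow> 'i \<Rightarrow> int) \<Rightarrow> 'i set \<Rightarrow> 'i \<Rightarrow> ('i \<Rightarrow> real) \<times> real \<Rightarrow> ('i \<Rightarrow> real) \<times> real" where
  "gen_act C S i = (\<lambda>(\<eta>, \<epsilon>). (refl_col C S i \<eta>, (\<eta> i) ^ r_num C S i * \<epsilon>))"

end

theory Submission
  imports Defs
begin

definition ev :: "'i \<Rightarrow> 'i \<Rightarrow> real" where
  "ev j = (\<lambda>k. if k = j then 1 else 0)"

definition matof :: "(('i \<Rightarrow> real) \<Rightarrow> ('i \<Rightarrow> real)) \<Rightarrow> 'i \<Rightarrow> 'i \<Rightarrow> int" where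
  "matof u = (\<lambda>k j. \<lfloor>u (ev j) k\<rfloor>)"

definition matrep :: "(('i::finite \<Rightarrow> real) \<Rightarrow> ('i \<Rightarrow> real)) \<Rightarrow> ('i \<Rightarrow> 'i \<Rightarrow> int) \<Rightarrow> bool" where
  "matrep u M \<longleftrightarrow> (\<forall>v j. u v j = (\<Sum>k\<in>UNIV. of_int (M j k) * v k))"

definition fixout :: "'i set \<Rightarrow> ('i \<Rightarrow> 'i \<Rightarrow> int) \<Rightarrow> bool" where
  "fixout S M \<longleftrightarrow> (\<forall>j k. j \<notin> S \<longrightarrow> M j k = (if j = k then 1 else 0))"

definition actM :: "'i set \<Rightarrow> ('i::finite \<Rightarrow> 'i \<Rightarrow> int) \<Rightarrow> ('i \<Rightarrow> real) \<times> real \<Rightarrow> ('i \<Rightarrow> real) \<times> real" where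
  "actM S M = (\<lambda>(\<eta>, e). ((\<lambda>j. if j \<in> S then (\<Prod>k\<in>UNIV. \<eta> k powi M k j) else 1),
      (\<Prod>k\<in>UNIV. \<eta> k powi (\<Sum>l\<in>-S. M k l)) * e))"

lemma matrep_matof: "matrep u M \<Longrightarrow> matof u = M"
  unfolding matrep_def matof_def ev_def
  by (auto simp: fun_eq_iff if_distrib cong: if_cong)

lemma matrep_comp:
  assumes "matrep u M" "matrep u' N"
  shows "matrep (u \<circ> u') (\<lambda>j l. \<Sum>k\<in>UNIV. M j k * N k l)"
  unfolding matrep_def
proof (intro allI)
  fix v j
  have "(u \<circ> u') v j = (\<Sum>k\<in>UNIV. of_int (M j k) * (\<Sum>l\<in>UNIV. of_int (N k l) * v l))"
    using assms unfolding matrep_def by simp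
  also have "\<dots> = (\<Sum>k\<in>UNIV. \<Sum>l\<in>UNIV. of_int (M j k) * of_int (N k l) * v l)"
    by (simp add: sum_distrib_left mult.assoc)
  also have "\<dots> = (\<Sum>l\<in>UNIV. \<Sum>k\<in>UNIV. of_int (M j k) * of_int (N k l) * v l)"
    by (rule sum.swap)
  also have "\<dots> = (\<Sum>l\<in>UNIV. of_int (\<Sum>k\<in>UNIV. M j k * N k l) * v l)"
    by (simp add: sum_distrib_right)
  finally show "(u \<circ> u') v j = (\<Sum>l\<in>UNIV. of_int (\<Sum>k\<in>UNIV. M j k * N k l) * v l)" .
qed

lemma fixout_comp:
  fixes M N :: "'i::finite \<Rightarrow> 'i \<Rightarrow> int"
  assumes "fixout S M" "fixout S N"
  shows "fixout S (\<lambda>j l. \<Sum>k\<in>UNIV. M j k * N k l)"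
  unfolding fixout_def
proof (intro allI impI)
  fix j l assume j: "j \<notin> S"
  have "(\<Sum>k\<in>UNIV. M j k * N k l) = (\<Sum>k\<in>UNIV. if j = k then N k l else 0)"
    using assms(1) j unfolding fixout_def by (intro sum.cong) auto
  also have "\<dots> = N j l" by (simp add: sum.delta')
  also have "\<dots> = (if j = l then 1 else 0)" using assms(2) j unfolding fixout_def by auto
  finally show "(\<Sum>k\<in>UNIV. M j k * N k l) = (if j = l then 1 else 0)" .
qed

lemma matrep_id: "matrep id (\<lambda>j k. if j = k then 1 else 0)"
  unfolding matrep_def
proof (intro allI)
  fix v :: "'a \<Rightarrow> real" and j
  have "(\<Sum>k\<in>UNIV. real_of_int (if j = k then 1 else 0) * v k) = (\<Sum>k\<in>UNIV. if j = k then v k else 0)"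
    by (intro sum.cong) auto
  then show "id v j = (\<Sum>k\<in>UNIV. real_of_int (if j = k then 1 else 0) * v k)" by simp
qed

lemma fixout_id: "fixout S (\<lambda>j k. if j = k then 1 else 0)"
  unfolding fixout_def by auto

definition reflmat :: "('i \<Rightarrow> 'i \<Rightarrow> int) \<Rightarrow> 'i \<Rightarrow> 'i \<Rightarrow> 'i \<Rightarrow> int" where
  "reflmat C i = (\<lambda>j k. (if j = k then 1 else 0) - (if j = i then C k i else 0))"

lemma matrep_refl: "matrep (simple_refl C i) (reflmat C i)"
  unfolding matrep_def
proof (intro allI)
  fix v :: "'a \<Rightarrow> real" and j
  have "(\<Sum>k\<in>UNIV. real_of_int (reflmat C i j k) * v k) =
     (\<Sum>k\<in>UNIV. (if j = k then v k else 0) - (if j = i then v k * of_int (C k i) else 0))"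
    unfolding reflmat_def by (intro sum.cong) (auto simp: algebra_simps)
  also have "\<dots> = simple_refl C i v j"
    unfolding simple_refl_def by (simp add: sum_subtractf)
  finally show "simple_refl C i v j = (\<Sum>k\<in>UNIV. real_of_int (reflmat C i j k) * v k)" by simp
qed

lemma fixout_refl: "i \<in> S \<Longrightarrow> fixout S (reflmat C i)"
  unfolding fixout_def reflmat_def by auto

lemma refl_invol:
  assumes "C i i = 2"
  shows "simple_refl C i \<circ> simple_refl C i = id"
proof -
  have "simple_refl C i (simple_refl C i v) = v" for v
  proof -
    define a where "a = (\<Sum>k\<in>UNIV. v k * of_int (C k i))"
    have s: "(\<Sum>k\<in>UNIV. simple_refl C i v k * of_int (C k i)) = - a"
    proof -
      have "(\<Sum>k\<in>UNIV. simple_refl C i v k * of_int (C k i))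
          = (\<Sum>k\<in>UNIV. v k * of_int (C k i) - (if k = i then a * of_int (C k i) else 0))"
        unfolding simple_refl_def a_def by (rule sum.cong) (auto simp: algebra_simps)
      also have "\<dots> = a - a * 2"
        by (simp add: sum_subtractf a_def assms)
      finally show ?thesis by simp
    qed
    show ?thesis
      using s unfolding simple_refl_def[of C i "simple_refl C i v"]
      by (auto simp: fun_eq_iff simple_refl_def a_def)
  qed
  then show ?thesis by (auto simp: fun_eq_iff)
qed

lemma weyl_comp:
  "w \<in> weyl_sub C S \<Longrightarrow> w' \<in> weyl_sub C S \<Longrightarrow> w \<circ> w' \<in> weyl_sub C S"
proof (induction w rule: weyl_sub.induct)
  case weyl_id
  then show ?case by simp
next
  case (weyl_step w i)
  then show ?case using weyl_sub.weyl_step[of "w \<circ> w'" C S i] by (metis comp_assoc)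
qed

lemma weyl_refl: "i \<in> S \<Longrightarrow> simple_refl C i \<in> weyl_sub C S"
  using weyl_sub.weyl_step[OF weyl_sub.weyl_id, of i S C] by (metis comp_id)

lemma weyl_inverse:
  assumes "\<forall>i. C i i = 2"
  shows "w \<in> weyl_sub C S \<Longrightarrow> \<exists>w'\<in>weyl_sub C S. w' \<circ> w = id \<and> w \<circ> w' = id"
proof (induction w rule: weyl_sub.induct)
  case weyl_id
  then show ?case by (metis weyl_sub.weyl_id comp_id)
next
  case (weyl_step w i)
  then obtain w' where w': "w' \<in> weyl_sub C S" "w' \<circ> w = id" "w \<circ> w' = id" by blast
  have r: "simple_refl C i \<circ> simple_refl C i = id" using refl_invol assms by blast
  have "(w' \<circ> simple_refl C i) \<circ> (simple_refl C i \<circ> w) = w' \<circ> (simple_refl C i \<circ> simple_refl C i) \<circ> w"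
    by (simp add: comp_assoc)
  also have "\<dots> = id" using r w' by simp
  finally have 1: "(w' \<circ> simple_refl C i) \<circ> (simple_refl C i \<circ> w) = id" .
  have "(simple_refl C i \<circ> w) \<circ> (w' \<circ> simple_refl C i) = simple_refl C i \<circ> (w \<circ> w') \<circ> simple_refl C i"
    by (simp add: comp_assoc)
  also have "\<dots> = id" using r w' by simp
  finally have 2: "(simple_refl C i \<circ> w) \<circ> (w' \<circ> simple_refl C i) = id" .
  have "w' \<circ> simple_refl C i \<in> weyl_sub C S"
    using weyl_comp[OF w'(1) weyl_refl[OF \<open>i \<in> S\<close>]] .
  with 1 2 show ?case by blast
qed

lemma weyl_mat: "w \<in> weyl_sub C S \<Longrightarrow> \<exists>M. matrep w M \<and> fixout S M"
proof (induction w rule: weyl_sub.induct)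
  case weyl_id
  then show ?case using matrep_id fixout_id by blast
next
  case (weyl_step w i)
  then obtain M where "matrep w M" "fixout S M" by blast
  then show ?case
    using matrep_comp[OF matrep_refl, of w M C i] fixout_comp[OF fixout_refl[OF \<open>i \<in> S\<close>], of M C]
    by blast
qed


lemma powi_sum:
  fixes x :: real
  assumes "x \<noteq> 0" "finite A"
  shows "x powi (\<Sum>a\<in>A. f a) = (\<Prod>a\<in>A. x powi f a)"
  using assms(2) by (induction A rule: finite_induct) (auto simp: power_int_add assms(1))

lemma prod_powi:
  fixes f :: "'a \<Rightarrow> real"
  assumes "finite A"
  shows "(\<Prod>a\<in>A. f a) powi n = (\<Prod>a\<in>A. f a powi n)"
  using assms by (induction A rule: finite_induct) (auto simp: power_int_mult_distrib)

lemma colored_nz: "\<eta> \<in> colored S \<Longrightarrow> \<eta> k \<noteq> 0"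
  unfolding colored_def by (cases "k \<in> S") fastforce+

lemma colored_out: "\<eta> \<in> colored S \<Longrightarrow> k \<notin> S \<Longrightarrow> \<eta> k = 1"
  unfolding colored_def by blast

lemma colored_abs: "\<eta> \<in> colored S \<Longrightarrow> \<bar>\<eta> k\<bar> = 1"
  unfolding colored_def by (cases "k \<in> S") fastforce+

lemma abs1: "\<bar>y::real\<bar> = 1 \<Longrightarrow> y = 1 \<or> y = -1"
  by linarith

lemma abs_prod_powi:
  fixes \<eta> :: "'i::finite \<Rightarrow> real"
  assumes "\<eta> \<in> colored S"
  shows "\<bar>\<Prod>k\<in>UNIV. \<eta> k powi g k\<bar> = 1"
  by (simp add: abs_prod power_int_abs colored_abs[OF assms])

lemma actM_closed:
  fixes M :: "'i::finite \<Rightarrow> 'i \<Rightarrow> int"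
  assumes "x \<in> colored S \<times> {1, -1}"
  shows "actM S M x \<in> colored S \<times> {1, -1}"
proof -
  obtain \<eta> e where xe: "x = (\<eta>, e)" and \<eta>: "\<eta> \<in> colored S" and e: "e = 1 \<or> e = -1"
    using assms by auto
  have "\<bar>(\<Prod>k\<in>UNIV. \<eta> k powi (\<Sum>l\<in>-S. M k l)) * e\<bar> = 1"
    using e by (auto simp: abs_mult abs_prod_powi[OF \<eta>])
  then have 2: "(\<Prod>k\<in>UNIV. \<eta> k powi (\<Sum>l\<in>-S. M k l)) * e \<in> {1, -1}"
    using abs1 by blast
  have 1: "(\<lambda>j. if j \<in> S then (\<Prod>k\<in>UNIV. \<eta> k powi M k j) else 1) \<in> colored S"
    unfolding colored_def using abs1[OF abs_prod_powi[OF \<eta>]] by auto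
  show ?thesis using 1 2 by (simp add: actM_def xe)
qed

lemma actM_id:
  assumes "x \<in> colored S \<times> {1, -1}"
  shows "actM S (\<lambda>j k. if j = k then 1 else 0) x = (x :: ('i::finite \<Rightarrow> real) \<times> real)"
proof -
  obtain \<eta> e where xe: "x = (\<eta>, e)" and \<eta>: "\<eta> \<in> colored S"
    using assms by auto
  have 1: "(\<Prod>k\<in>UNIV. \<eta> k powi (if k = j then 1 else 0)) = \<eta> j" for j
  proof -
    have "(\<Prod>k\<in>UNIV. \<eta> k powi (if k = j then 1 else 0)) = (\<Prod>k\<in>UNIV. if k = j then \<eta> k else 1)"
      by (intro prod.cong) auto
    then show ?thesis by simp
  qed
  have 2: "(\<Prod>k\<in>UNIV. \<eta> k powi (\<Sum>l\<in>-S. if k = l then 1 else 0)) = 1"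
  proof -
    show ?thesis
      by (intro prod.neutral) (auto simp: sum.delta colored_out[OF \<eta>])
  qed
  have 3: "(\<Prod>k\<in>UNIV. \<eta> k powi (if k \<notin> S then 1 else 0)) = 1"
    by (intro prod.neutral) (auto simp: colored_out[OF \<eta>])
  show ?thesis
    using colored_out[OF \<eta>] by (auto simp: actM_def xe 1 2 3 fun_eq_iff)
qed


lemma actM_comp:
  fixes P Q :: "'i::finite \<Rightarrow> 'i \<Rightarrow> int"
  assumes Q: "fixout S Q" and x: "x \<in> colored S \<times> {1, -1}"
  shows "actM S (\<lambda>j l. \<Sum>k\<in>UNIV. P j k * Q k l) x = actM S Q (actM S P x)"
proof -
  obtain \<eta> e where xe: "x = (\<eta>, e)" and \<eta>: "\<eta> \<in> colored S"
    using x by auto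
  note nz = colored_nz[OF \<eta>]
  define \<eta>' where "\<eta>' = (\<lambda>j. if j \<in> S then (\<Prod>k\<in>UNIV. \<eta> k powi P k j) else 1)"
  have a: "actM S P x = (\<eta>', (\<Prod>k\<in>UNIV. \<eta> k powi (\<Sum>l\<in>-S. P k l)) * e)"
    by (simp add: actM_def xe \<eta>'_def)
  have first: "(\<Prod>l\<in>UNIV. \<eta> l powi (\<Sum>k\<in>UNIV. P l k * Q k j)) = (\<Prod>k\<in>UNIV. \<eta>' k powi Q k j)"
    if j: "j \<in> S" for j
  proof -
    have "(\<Prod>l\<in>UNIV. \<eta> l powi (\<Sum>k\<in>UNIV. P l k * Q k j))
        = (\<Prod>l\<in>UNIV. \<Prod>k\<in>UNIV. (\<eta> l powi P l k) powi Q k j)"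
      by (simp add: powi_sum[OF nz] power_int_mult)
    also have "\<dots> = (\<Prod>k\<in>UNIV. \<Prod>l\<in>UNIV. (\<eta> l powi P l k) powi Q k j)"
      by (rule prod.swap)
    also have "\<dots> = (\<Prod>k\<in>UNIV. (\<Prod>l\<in>UNIV. \<eta> l powi P l k) powi Q k j)"
      by (simp add: prod_powi)
    also have "\<dots> = (\<Prod>k\<in>UNIV. \<eta>' k powi Q k j)"
    proof (rule prod.cong[OF refl])
      fix k
      show "(\<Prod>l\<in>UNIV. \<eta> l powi P l k) powi Q k j = \<eta>' k powi Q k j"
      proof (cases "k \<in> S")
        case True
        then show ?thesis by (simp add: \<eta>'_def)
      next
        case False
        then have "Q k j = 0" using Q j unfolding fixout_def by auto
        then show ?thesis by simp
      qed
    qed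
    finally show ?thesis .
  qed
  have second: "(\<Prod>l\<in>UNIV. \<eta> l powi (\<Sum>m\<in>-S. \<Sum>k\<in>UNIV. P l k * Q k m))
      = (\<Prod>k\<in>UNIV. \<eta>' k powi (\<Sum>m\<in>-S. Q k m)) * (\<Prod>l\<in>UNIV. \<eta> l powi (\<Sum>k\<in>-S. P l k))"
  proof -
    have "(\<Prod>l\<in>UNIV. \<eta> l powi (\<Sum>m\<in>-S. \<Sum>k\<in>UNIV. P l k * Q k m))
        = (\<Prod>l\<in>UNIV. \<eta> l powi (\<Sum>k\<in>UNIV. P l k * (\<Sum>m\<in>-S. Q k m)))"
      by (simp add: sum_distrib_left sum.swap[of _ "-S"])
    also have "\<dots> = (\<Prod>l\<in>UNIV. \<Prod>k\<in>UNIV. (\<eta> l powi P l k) powi (\<Sum>m\<in>-S. Q k m))"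
      by (simp add: powi_sum[OF nz] power_int_mult)
    also have "\<dots> = (\<Prod>k\<in>UNIV. \<Prod>l\<in>UNIV. (\<eta> l powi P l k) powi (\<Sum>m\<in>-S. Q k m))"
      by (rule prod.swap)
    also have "\<dots> = (\<Prod>k\<in>UNIV. (\<Prod>l\<in>UNIV. \<eta> l powi P l k) powi (\<Sum>m\<in>-S. Q k m))"
      by (simp add: prod_powi)
    also have "\<dots> = (\<Prod>k\<in>UNIV. \<eta>' k powi (\<Sum>m\<in>-S. Q k m) *
                       (if k \<in> -S then (\<Prod>l\<in>UNIV. \<eta> l powi P l k) else 1))"
    proof (rule prod.cong[OF refl])
      fix k
      show "(\<Prod>l\<in>UNIV. \<eta> l powi P l k) powi (\<Sum>m\<in>-S. Q k m) = \<eta>' k powi (\<Sum>m\<in>-S. Q k m) *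
                       (if k \<in> -S then (\<Prod>l\<in>UNIV. \<eta> l powi P l k) else 1)"
      proof (cases "k \<in> S")
        case True
        then show ?thesis by (simp add: \<eta>'_def)
      next
        case False
        then have "(\<Sum>m\<in>-S. Q k m) = (\<Sum>m\<in>-S. if k = m then 1 else 0)"
          using Q unfolding fixout_def by (intro sum.cong) auto
        also have "\<dots> = 1" using False by (simp add: sum.delta)
        finally show ?thesis using False by (simp add: \<eta>'_def)
      qed
    qed
    also have "\<dots> = (\<Prod>k\<in>UNIV. \<eta>' k powi (\<Sum>m\<in>-S. Q k m)) *
                     (\<Prod>k\<in>UNIV. if k \<in> -S then (\<Prod>l\<in>UNIV. \<eta> l powi P l k) else 1)"
      by (rule prod.distrib)
    also have "(\<Prod>k\<in>UNIV. if k \<in> -S then (\<Prod>l\<in>UNIV. \<eta> l powi P l k) else 1)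
        = (\<Prod>k\<in>-S. \<Prod>l\<in>UNIV. \<eta> l powi P l k)"
      by (simp add: prod.If_cases Compl_eq)
    also have "\<dots> = (\<Prod>l\<in>UNIV. \<Prod>k\<in>-S. \<eta> l powi P l k)"
      by (rule prod.swap)
    also have "\<dots> = (\<Prod>l\<in>UNIV. \<eta> l powi (\<Sum>k\<in>-S. P l k))"
      by (simp add: powi_sum[OF nz])
    finally show ?thesis .
  qed
  show ?thesis
    unfolding a by (simp add: actM_def xe first second \<eta>'_def[symmetric] mult.assoc fun_eq_iff)
qed


lemma minus_one_powi: "(-1::real) powi n = (if even n then 1 else -1)"
proof -
  have "n = int (nat \<bar>n\<bar>) \<or> n = - int (nat \<bar>n\<bar>)" by arith
  then show ?thesis
  proof
    assume h: "n = int (nat \<bar>n\<bar>)"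
    show ?thesis by (subst h, subst power_int_of_nat) (simp add: h[symmetric])
  next
    assume h: "n = - int (nat \<bar>n\<bar>)"
    show ?thesis
      by (subst h, subst power_int_minus_one_minus, subst power_int_of_nat)
         (simp add: h[symmetric])
  qed
qed

lemma parity_powi:
  fixes y :: real
  assumes "y = 1 \<or> y = -1" "finite A"
  shows "y powi (- (\<Sum>a\<in>A. f a)) = y ^ card {a\<in>A. odd (f a)}"
  using assms(1)
proof
  assume "y = -1"
  then show ?thesis
    using even_sum_iff[OF assms(2), of f]
    by (simp add: minus_one_powi power_int_minus_one_minus minus_one_power_iff)
qed simp

lemma actM_refl:
  assumes i: "i \<in> S" and x: "x \<in> colored S \<times> {1, -1}"
  shows "actM S (reflmat C i) x = gen_act C S i (x :: ('i::finite \<Rightarrow> real) \<times> real)"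
proof -
  obtain \<eta> e where xe: "x = (\<eta>, e)" and \<eta>: "\<eta> \<in> colored S"
    using x by auto
  note nz = colored_nz[OF \<eta>]
  have first: "(\<Prod>k\<in>UNIV. \<eta> k powi reflmat C i k j) = \<eta> j * \<eta> i powi (- C j i)" for j
  proof -
    have "(\<Prod>k\<in>UNIV. \<eta> k powi reflmat C i k j)
       = (\<Prod>k\<in>UNIV. (if k = j then \<eta> k else 1) * (if k = i then \<eta> i powi (- C j i) else 1))"
    proof (rule prod.cong[OF refl])
      fix k
      have "\<eta> k powi reflmat C i k j = \<eta> k powi ((if k = j then 1 else 0) + (- (if k = i then C j i else 0)))"
        unfolding reflmat_def by simp
      also have "\<dots> = \<eta> k powi (if k = j then 1 else 0) * \<eta> k powi (- (if k = i then C j i else 0))"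
        by (rule power_int_add) (simp add: nz)
      finally show "\<eta> k powi reflmat C i k j = (if k = j then \<eta> k else 1) * (if k = i then \<eta> i powi (- C j i) else 1)"
        by auto
    qed
    also have "\<dots> = \<eta> j * \<eta> i powi (- C j i)"
      by (simp add: prod.distrib)
    finally show ?thesis .
  qed
  have second: "(\<Prod>k\<in>UNIV. \<eta> k powi (\<Sum>l\<in>-S. reflmat C i k l)) = \<eta> i powi (- (\<Sum>l\<in>-S. C l i))"
  proof -
    have "(\<Prod>k\<in>UNIV. \<eta> k powi (\<Sum>l\<in>-S. reflmat C i k l))
        = (\<Prod>k\<in>UNIV. if k = i then \<eta> i powi (- (\<Sum>l\<in>-S. C l i)) else 1)"
    proof (rule prod.cong[OF refl])
      fix k
      have s: "(\<Sum>l\<in>-S. reflmat C i k l) = (\<Sum>l\<in>-S. if k = l then 1 else 0) - (if k = i then (\<Sum>l\<in>-S. C l i) else 0)"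
        unfolding reflmat_def by (simp add: sum_subtractf)
      show "\<eta> k powi (\<Sum>l\<in>-S. reflmat C i k l) = (if k = i then \<eta> i powi (- (\<Sum>l\<in>-S. C l i)) else 1)"
      proof (cases "k \<in> S")
        case True
        then show ?thesis unfolding s by (simp add: sum.delta)
      next
        case False
        then show ?thesis using i colored_out[OF \<eta> False] by auto
      qed
    qed
    also have "\<dots> = \<eta> i powi (- (\<Sum>l\<in>-S. C l i))" by simp
    finally show ?thesis .
  qed
  have pm: "\<eta> i = 1 \<or> \<eta> i = -1" using \<eta> i unfolding colored_def by blast
  have par: "\<eta> i powi (- (\<Sum>l\<in>-S. C l i)) = \<eta> i ^ r_num C S i"
    unfolding r_num_def using parity_powi[OF pm, of "-S" "\<lambda>l. C l i"]
    by (simp add: Compl_eq)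
  show ?thesis
    by (simp add: actM_def gen_act_def refl_col_def xe first second par fun_eq_iff)
qed


lemma weyl_inv_mat:
  assumes C2: "\<forall>i. C i i = 2" and w: "w \<in> weyl_sub C S"
  shows "bij w \<and> inv w \<in> weyl_sub C S \<and> (\<exists>M. matrep (inv w) M \<and> fixout S M)"
proof -
  obtain w' where w': "w' \<in> weyl_sub C S" "w' \<circ> w = id" "w \<circ> w' = id"
    using weyl_inverse[OF C2 w] by blast
  have iw: "inv w = w'" by (rule inv_unique_comp) (use w' in auto)
  have "bij w" using w' o_bij by blast
  then show ?thesis using iw w' weyl_mat[OF w'(1)] by simp
qed

theorem proposition4p1p2:
  fixes C :: "'i::finite \<Rightarrow> 'i \<Rightarrow> int" and S :: "'i set"
  assumes "finite_type_cartan C"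
  shows "\<exists>act :: (('i \<Rightarrow> real) \<Rightarrow> ('i \<Rightarrow> real)) \<Rightarrow> ('i \<Rightarrow> real) \<times> real \<Rightarrow> ('i \<Rightarrow> real) \<times> real.
           (\<forall>w\<in>weyl_sub C S. \<forall>x\<in>colored S \<times> {1, -1}. act w x \<in> colored S \<times> {1, -1}) \<and>
           (\<forall>x\<in>colored S \<times> {1, -1}. act id x = x) \<and>
           (\<forall>w\<in>weyl_sub C S. \<forall>w'\<in>weyl_sub C S. \<forall>x\<in>colored S \<times> {1, -1}.
               act (w \<circ> w') x = act w (act w' x)) \<and>
           (\<forall>i\<in>S. \<forall>x\<in>colored S \<times> {1, -1}. act (simple_refl C i) x = gen_act C S i x)"
proof -
  have C2: "\<forall>i. C i i = 2" using assms unfolding finite_type_cartan_def by blast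
  define act where "act = (\<lambda>w :: ('i \<Rightarrow> real) \<Rightarrow> ('i \<Rightarrow> real). actM S (matof (inv w)))"
  have p1: "\<forall>w\<in>weyl_sub C S. \<forall>x\<in>colored S \<times> {1, -1}. act w x \<in> colored S \<times> {1, -1}"
    unfolding act_def using actM_closed by blast
  have p2: "\<forall>x\<in>colored S \<times> {1, -1}. act id x = x"
  proof
    fix x :: "('i \<Rightarrow> real) \<times> real" assume x: "x \<in> colored S \<times> {1, -1}"
    have m: "matof (id :: ('i \<Rightarrow> real) \<Rightarrow> ('i \<Rightarrow> real)) = (\<lambda>j k. if j = k then 1 else 0)"
      by (rule matrep_matof[OF matrep_id])
    show "act id x = x" unfolding act_def inv_id m by (rule actM_id[OF x])
  qed
  have p3: "\<forall>w\<in>weyl_sub C S. \<forall>w'\<in>weyl_sub C S. \<forall>x\<in>colored S \<times> {1, -1}.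
               act (w \<circ> w') x = act w (act w' x)"
  proof (intro ballI)
    fix w w' :: "('i \<Rightarrow> real) \<Rightarrow> ('i \<Rightarrow> real)" and x :: "('i \<Rightarrow> real) \<times> real"
    assume w: "w \<in> weyl_sub C S" and w': "w' \<in> weyl_sub C S" and x: "x \<in> colored S \<times> {1, -1}"
    obtain Q where Q: "matrep (inv w) Q" "fixout S Q" and bw: "bij w"
      using weyl_inv_mat[OF C2 w] by blast
    obtain P where P: "matrep (inv w') P" and bw': "bij w'"
      using weyl_inv_mat[OF C2 w'] by blast
    have "inv (w \<circ> w') = inv w' \<circ> inv w" by (rule o_inv_distrib[OF bw bw'])
    then have "matof (inv (w \<circ> w')) = (\<lambda>j l. \<Sum>k\<in>UNIV. P j k * Q k l)"
      using matrep_matof[OF matrep_comp[OF P Q(1)]] by simp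
    then show "act (w \<circ> w') x = act w (act w' x)"
      unfolding act_def using actM_comp[OF Q(2) x, of P] matrep_matof[OF P] matrep_matof[OF Q(1)]
      by simp
  qed
  have p4: "\<forall>i\<in>S. \<forall>x\<in>colored S \<times> {1, -1}. act (simple_refl C i) x = gen_act C S i x"
  proof (intro ballI)
    fix i and x :: "('i \<Rightarrow> real) \<times> real" assume i: "i \<in> S" and x: "x \<in> colored S \<times> {1, -1}"
    have "inv (simple_refl C i) = simple_refl C i"
      by (rule inv_unique_comp) (use refl_invol C2 in auto)
    then show "act (simple_refl C i) x = gen_act C S i x"
      unfolding act_def using matrep_matof[OF matrep_refl[of C i]] actM_refl[OF i x, of C] by simp
  qed
  show ?thesis using p1 p2 p3 p4 by blast
qed

end
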